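(* Let $\Gamma$ be a connected countably infinite graph, let $(B_n)_{n\in\mathbb N}$ satisfy $(\dagger)$, and let $M_1,M_2$ be maximum matchings. Then every component of the symmetric difference $M_1\oplus M_2$ is alternating with respect to $M_1$ and $M_2$, and is either a cycle of even length, a double ray, or a path of even length whose two end-vertices $u,v$ both lie in $B_n\setminus B_{n-1}$ for the same $n$ (with $B_0:=\emptyset$).
   Context: Condition $(\dagger)$ on $(B_n)_{n\in\mathbb N}$: each $B_n\subseteq V(\Gamma)$ is finite, $B_n\subseteq B_{n+1}$, $\bigcup_n B_n=V(\Gamma)$, and the subgraph induced on each $B_n$ is connected. A matching $M$ misses a vertex $x$ if no edge of $M$ contains $x$. The miss sequence of $M$ is $(m_n)_{n\in\mathbb N}$ with $m_n$ the number of vertices of $B_n$ missed by $M$. For matchings $M_1,M_2$ with miss sequences $(a_n),(b_n)$, write $M_1<M_2$ if there is $N$ with $a_n=b_n$ for all $n<N$ and $a_N>b_N$. A maximum matching is a matching $M$ for which no matching $M'$ satisfies $M<M'$. A path, cycle or double ray is alternating with respect to $M$ if every other edge of it lies in $M$. $S\oplus T=(S\cup T)\setminus(S\cap T)$. *)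

theory Defs
  imports Main "HOL-Library.Countable_Set"
begin

definition simple_graph :: "'a set \<Rightarrow> 'a set set \<Rightarrow> bool" where
  "simple_graph V E \<longleftrightarrow> (\<forall>e\<in>E. \<exists>x y. x \<noteq> y \<and> x \<in> V \<and> y \<in> V \<and> e = {x, y})"

definition induced_connected :: "'a set set \<Rightarrow> 'a set \<Rightarrow> bool" where
  "induced_connected E S \<longleftrightarrow>
     (\<forall>x\<in>S. \<forall>y\<in>S. (\<lambda>a b. {a, b} \<in> E \<and> a \<in> S \<and> b \<in> S)\<^sup>*\<^sup>* x y)"

text \<open>Condition (dagger); the sequence is indexed by nat starting at 0.\<close>
definition dagger :: "'a set \<Rightarrow> 'a set set \<Rightarrow> (nat \<Rightarrow> 'a set) \<Rightarrow> bool" where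
  "dagger V E B \<longleftrightarrow>
     (\<forall>n. finite (B n) \<and> B n \<subseteq> V \<and> B n \<subseteq> B (Suc n) \<and> induced_connected E (B n))
     \<and> (\<Union>n. B n) = V"

definition matching :: "'a set set \<Rightarrow> 'a set set \<Rightarrow> bool" where
  "matching E M \<longleftrightarrow> M \<subseteq> E \<and> (\<forall>e\<in>M. \<forall>f\<in>M. e \<noteq> f \<longrightarrow> e \<inter> f = {})"

definition misses :: "'a set set \<Rightarrow> 'a \<Rightarrow> bool" where
  "misses M x \<longleftrightarrow> (\<forall>e\<in>M. x \<notin> e)"

definition miss_seq :: "(nat \<Rightarrow> 'a set) \<Rightarrow> 'a set set \<Rightarrow> nat \<Rightarrow> nat" where
  "miss_seq B M n = card {x \<in> B n. misses M x}"

definition matching_less :: "(nat \<Rightarrow> 'a set) \<Rightarrow> 'a set set \<Rightarrow> 'a set set \<Rightarrow> bool" where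
  "matching_less B M1 M2 \<longleftrightarrow>
     (\<exists>N. (\<forall>n<N. miss_seq B M1 n = miss_seq B M2 n) \<and> miss_seq B M1 N > miss_seq B M2 N)"

definition maximum_matching :: "'a set set \<Rightarrow> (nat \<Rightarrow> 'a set) \<Rightarrow> 'a set set \<Rightarrow> bool" where
  "maximum_matching E B M \<longleftrightarrow> matching E M \<and> \<not> (\<exists>M'. matching E M' \<and> matching_less B M M')"

definition sym_diff :: "'a set \<Rightarrow> 'a set \<Rightarrow> 'a set" (infixl "\<oplus>" 65) where
  "S \<oplus> T = (S \<union> T) - (S \<inter> T)"

definition edge_components :: "'a set set \<Rightarrow> 'a set set set" where
  "edge_components D =
     {C. \<exists>x\<in>\<Union>D. C = {e\<in>D. \<exists>y\<in>e. (\<lambda>a b. {a, b} \<in> D)\<^sup>*\<^sup>* x y}}"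

definition walk_edges :: "'a list \<Rightarrow> 'a set set" where
  "walk_edges xs = {{xs ! i, xs ! Suc i} | i. Suc i < length xs}"

definition walk_alternating :: "'a set set \<Rightarrow> 'a list \<Rightarrow> bool" where
  "walk_alternating M xs \<longleftrightarrow>
     (\<forall>i. Suc (Suc i) < length xs \<longrightarrow>
        ({xs ! i, xs ! Suc i} \<in> M \<longleftrightarrow> {xs ! Suc i, xs ! Suc (Suc i)} \<notin> M))"

definition alt_even_cycle :: "'a set set \<Rightarrow> 'a set set \<Rightarrow> 'a set set \<Rightarrow> bool" where
  "alt_even_cycle M1 M2 C \<longleftrightarrow>
     (\<exists>xs. distinct xs \<and> length xs \<ge> 3 \<and> even (length xs) \<and>
        C = walk_edges (xs @ [xs ! 0]) \<and>
        walk_alternating M1 (xs @ [xs ! 0, xs ! 1]) \<and>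
        walk_alternating M2 (xs @ [xs ! 0, xs ! 1]))"

definition alt_double_ray :: "'a set set \<Rightarrow> 'a set set \<Rightarrow> 'a set set \<Rightarrow> bool" where
  "alt_double_ray M1 M2 C \<longleftrightarrow>
     (\<exists>f :: int \<Rightarrow> 'a. inj f \<and> C = range (\<lambda>i. {f i, f (i + 1)}) \<and>
        (\<forall>i. {f i, f (i + 1)} \<in> M1 \<longleftrightarrow> {f (i + 1), f (i + 2)} \<notin> M1) \<and>
        (\<forall>i. {f i, f (i + 1)} \<in> M2 \<longleftrightarrow> {f (i + 1), f (i + 2)} \<notin> M2))"

text \<open>C is the edge set of a path of even length alternating w.r.t. M1 and M2 whose
  end-vertices u, v lie in B n - B (n-1) for the same n (with B (-1) = {}; here B is
  indexed from 0).\<close>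
definition alt_even_path_same_layer ::
  "(nat \<Rightarrow> 'a set) \<Rightarrow> 'a set set \<Rightarrow> 'a set set \<Rightarrow> 'a set set \<Rightarrow> bool" where
  "alt_even_path_same_layer B M1 M2 C \<longleftrightarrow>
     (\<exists>xs. distinct xs \<and> length xs \<ge> 2 \<and> even (length xs - 1) \<and>
        C = walk_edges xs \<and>
        walk_alternating M1 xs \<and> walk_alternating M2 xs \<and>
        (\<exists>n. hd xs \<in> B n \<and> last xs \<in> B n \<and>
             (n = 0 \<or> (hd xs \<notin> B (n - 1) \<and> last xs \<notin> B (n - 1)))))"

end

theory Submission
  imports Defs
begin


lemma edge_form:
  assumes "simple_graph V E" "e \<in> E"
  shows "\<exists>a b. a \<noteq> b \<and> a \<in> V \<and> b \<in> V \<and> e = {a,b}"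
  using assms unfolding simple_graph_def by blast

lemma edge_form2:
  assumes "simple_graph V E" "e \<in> E" "y \<in> e"
  shows "\<exists>z. z \<noteq> y \<and> z \<in> V \<and> y \<in> V \<and> e = {y,z}"
  using edge_form[OF assms(1,2)] assms(3) by (metis doubleton_eq_iff insert_iff singletonD)

lemma sym_diff_comm: "S \<oplus> T = T \<oplus> (S::'a set)"
  unfolding sym_diff_def by blast

lemma swap_lemma:
  assumes m1: "matching E M1" and m2: "matching E M2"
    and CD: "C \<subseteq> M1 \<oplus> M2"
    and cl: "\<forall>e\<in>M1 \<oplus> M2. e \<inter> \<Union>C \<noteq> {} \<longrightarrow> e \<in> C"
  shows "matching E (M2 \<oplus> C) \<and>
         (\<forall>v. misses (M2 \<oplus> C) v \<longleftrightarrow> (if v \<in> \<Union>C then misses M1 v else misses M2 v))"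
proof -
  have inW: "e \<in> M2 \<oplus> C \<longleftrightarrow> e \<in> M1" if vv: "v \<in> \<Union>C" "v \<in> e" for v e
  proof -
    obtain c where c: "c \<in> C" "v \<in> c" using vv by blast
    have cD: "c \<in> M1 \<oplus> M2" using c CD by blast
    show ?thesis
    proof
      assume "e \<in> M2 \<oplus> C"
      then show "e \<in> M1" using CD cl vv unfolding sym_diff_def by blast
    next
      assume e1: "e \<in> M1"
      show "e \<in> M2 \<oplus> C"
      proof (cases "e \<in> M2")
        case True
        have "c \<noteq> e" using cD e1 True unfolding sym_diff_def by blast
        then have False using cD e1 True m1 m2 c(2) vv(2) unfolding sym_diff_def matching_def by blast
        then show ?thesis ..
      next
        case False
        then have "e \<in> M1 \<oplus> M2" using e1 unfolding sym_diff_def by blast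
        then have "e \<in> C" using cl vv by blast
        then show ?thesis using False unfolding sym_diff_def by blast
      qed
    qed
  qed
  have outW: "e \<in> M2 \<oplus> C \<longleftrightarrow> e \<in> M2" if "v \<notin> \<Union>C" "v \<in> e" for v e
    using that unfolding sym_diff_def by blast
  have mis: "misses (M2 \<oplus> C) v \<longleftrightarrow> (if v \<in> \<Union>C then misses M1 v else misses M2 v)" for v
  proof (cases "v \<in> \<Union>C")
    case True
    then show ?thesis unfolding misses_def using inW[of v, OF True] by meson
  next
    case False
    then show ?thesis unfolding misses_def using outW[of v, OF False] by meson
  qed
  have "M1 \<subseteq> E" "M2 \<subseteq> E" using m1 m2 unfolding matching_def by auto
  then have sub: "M2 \<oplus> C \<subseteq> E" using CD unfolding sym_diff_def by blast
  have disj: "e \<inter> f = {}" if "e \<in> M2 \<oplus> C" "f \<in> M2 \<oplus> C" "e \<noteq> f" for e f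
  proof (rule ccontr)
    assume "e \<inter> f \<noteq> {}"
    then obtain v where v: "v \<in> e" "v \<in> f" by blast
    show False
    proof (cases "v \<in> \<Union>C")
      case True
      then have "e \<in> M1" "f \<in> M1" using inW v that by blast+
      then show False using m1 that(3) v unfolding matching_def by blast
    next
      case False
      then have "e \<in> M2" "f \<in> M2" using outW v that by blast+
      then show False using m2 that(3) v unfolding matching_def by blast
    qed
  qed
  show ?thesis using sub disj mis unfolding matching_def by blast
qed

lemma comp_closed:
  assumes sg: "simple_graph V E" and DE: "D \<subseteq> E"
    and C: "C = {e\<in>D. \<exists>y\<in>e. (\<lambda>a b. {a, b} \<in> D)\<^sup>*\<^sup>* x y}"
  shows "C \<subseteq> D \<and> (\<forall>e\<in>D. e \<inter> \<Union>C \<noteq> {} \<longrightarrow> e \<in> C)"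
proof -
  have "e \<in> C" if e: "e \<in> D" "z \<in> e" "z \<in> \<Union>C" for e z
  proof -
    obtain c where c: "c \<in> C" "z \<in> c" using e by blast
    obtain y where y: "y \<in> c" "(\<lambda>a b. {a, b} \<in> D)\<^sup>*\<^sup>* x y" using c C by blast
    have cD: "c \<in> D" using c C by blast
    have "(\<lambda>a b. {a, b} \<in> D)\<^sup>*\<^sup>* x z"
    proof (cases "y = z")
      case True then show ?thesis using y by simp
    next
      case False
      obtain w where "c = {y, w}" using edge_form2[OF sg _ y(1)] cD DE by blast
      then have "{y,z} \<in> D" using False c(2) cD by auto
      then show ?thesis using y(2) by (simp add: rtranclp.rtrancl_into_rtrancl)
    qed
    then show ?thesis using e C by blast
  qed
  then show ?thesis using C by blast
qed




lemma cnt: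
  assumes fin: "finite X" and P: "\<And>v. P' v \<longleftrightarrow> (if v \<in> W then P1 v else P2 v)"
  shows "card {x\<in>X. P' x} + card ({v\<in>W. P2 v} \<inter> X) = card {x\<in>X. P2 x} + card ({v\<in>W. P1 v} \<inter> X)"
proof -
  have e1: "{x\<in>X. P' x} = {x\<in>X. P2 x \<and> x \<notin> W} \<union> ({v\<in>W. P1 v} \<inter> X)" using P by auto
  have e2: "{x\<in>X. P2 x} = {x\<in>X. P2 x \<and> x \<notin> W} \<union> ({v\<in>W. P2 v} \<inter> X)" by auto
  have c1: "card {x\<in>X. P' x} = card {x\<in>X. P2 x \<and> x \<notin> W} + card ({v\<in>W. P1 v} \<inter> X)"
    unfolding e1 by (rule card_Un_disjoint) (use fin in auto)
  have c2: "card {x\<in>X. P2 x} = card {x\<in>X. P2 x \<and> x \<notin> W} + card ({v\<in>W. P2 v} \<inter> X)"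
    unfolding e2 by (rule card_Un_disjoint) (use fin in auto)
  show ?thesis using c1 c2 by simp
qed

lemma keq:
  assumes m1: "maximum_matching E B M1" and m2: "maximum_matching E B M2"
    and dag: "dagger V E B"
    and CD: "C \<subseteq> M1 \<oplus> M2"
    and cl: "\<forall>e\<in>M1 \<oplus> M2. e \<inter> \<Union>C \<noteq> {} \<longrightarrow> e \<in> C"
  shows "card ({v\<in>\<Union>C. misses M1 v} \<inter> B n) = card ({v\<in>\<Union>C. misses M2 v} \<inter> B n)"
proof -
  define W where "W = \<Union>C"
  define a where "a n = card ({v\<in>W. misses M1 v} \<inter> B n)" for n
  define b where "b n = card ({v\<in>W. misses M2 v} \<inter> B n)" for n
  have mm1: "matching E M1" and mm2: "matching E M2" using m1 m2 unfolding maximum_matching_def by auto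
  have fin: "finite (B n)" for n using dag unfolding dagger_def by auto
  have s2: "matching E (M2 \<oplus> C) \<and>
         (\<forall>v. misses (M2 \<oplus> C) v \<longleftrightarrow> (if v \<in> W then misses M1 v else misses M2 v))"
    using swap_lemma[OF mm1 mm2 CD cl] W_def by simp
  have CD': "C \<subseteq> M2 \<oplus> M1" and cl': "\<forall>e\<in>M2 \<oplus> M1. e \<inter> \<Union>C \<noteq> {} \<longrightarrow> e \<in> C"
    using CD cl sym_diff_comm[of M1 M2] by auto
  have s1: "matching E (M1 \<oplus> C) \<and>
         (\<forall>v. misses (M1 \<oplus> C) v \<longleftrightarrow> (if v \<in> W then misses M2 v else misses M1 v))"
    using swap_lemma[OF mm2 mm1 CD' cl'] W_def by simp
  have c2: "miss_seq B (M2 \<oplus> C) n + b n = miss_seq B M2 n + a n" for n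
    unfolding miss_seq_def a_def b_def by (rule cnt[OF fin]) (use s2 in blast)
  have c1: "miss_seq B (M1 \<oplus> C) n + a n = miss_seq B M1 n + b n" for n
    unfolding miss_seq_def a_def b_def by (rule cnt[OF fin]) (use s1 in blast)
  have n2: "\<not> matching_less B M2 (M2 \<oplus> C)" using m2 s2 unfolding maximum_matching_def by blast
  have n1: "\<not> matching_less B M1 (M1 \<oplus> C)" using m1 s1 unfolding maximum_matching_def by blast
  have "a n = b n" for n
  proof (induction n rule: less_induct)
    case (less n)
    have e2: "\<forall>m<n. miss_seq B M2 m = miss_seq B (M2 \<oplus> C) m" using less c2 by (metis add_right_cancel)
    have e1: "\<forall>m<n. miss_seq B M1 m = miss_seq B (M1 \<oplus> C) m" using less c1 by (metis add_right_cancel)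
    show ?case
    proof (rule ccontr)
      assume "a n \<noteq> b n"
      then consider "a n < b n" | "b n < a n" by linarith
      then show False
      proof cases
        case 1
        then have "miss_seq B M2 n > miss_seq B (M2 \<oplus> C) n" using c2[of n] by linarith
        then show False using n2 e2 unfolding matching_less_def by blast
      next
        case 2
        then have "miss_seq B M1 n > miss_seq B (M1 \<oplus> C) n" using c1[of n] by linarith
        then show False using n1 e1 unfolding matching_less_def by blast
      qed
    qed
  qed
  then show ?thesis unfolding a_def b_def W_def by simp
qed




definition Mp :: "'a set set \<Rightarrow> 'a set set \<Rightarrow> bool \<Rightarrow> 'a set set" where
  "Mp M1 M2 p = (if p then M1 - M2 else M2 - M1)"

definition nb :: "'a set set \<Rightarrow> 'a set set \<Rightarrow> bool \<Rightarrow> 'a \<Rightarrow> 'a option" where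
  "nb M1 M2 p a = (if \<exists>b. {a,b} \<in> Mp M1 M2 p then Some (THE b. {a,b} \<in> Mp M1 M2 p) else None)"

fun fwd :: "(bool \<Rightarrow> 'a \<Rightarrow> 'a option) \<Rightarrow> 'a \<Rightarrow> nat \<Rightarrow> 'a option" where
  "fwd N x 0 = Some x"
| "fwd N x (Suc k) = Option.bind (fwd N x k) (N (even k))"

fun bwd :: "(bool \<Rightarrow> 'a \<Rightarrow> 'a option) \<Rightarrow> 'a \<Rightarrow> nat \<Rightarrow> 'a option" where
  "bwd N x 0 = Some x"
| "bwd N x (Suc k) = Option.bind (bwd N x k) (N (odd k))"

definition wlk :: "(bool \<Rightarrow> 'a \<Rightarrow> 'a option) \<Rightarrow> 'a \<Rightarrow> int \<Rightarrow> 'a option" where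
  "wlk N x i = (if 0 \<le> i then fwd N x (nat i) else bwd N x (nat (-i)))"

locale ctx =
  fixes V :: "'a set" and E M1 M2 and x :: 'a
  assumes sg: "simple_graph V E" and m1: "matching E M1" and m2: "matching E M2"
    and x: "x \<in> \<Union>(M1 \<oplus> M2)"
begin

abbreviation D where "D \<equiv> M1 \<oplus> M2"
abbreviation N where "N \<equiv> nb M1 M2"
abbreviation f where "f \<equiv> wlk (nb M1 M2) x"

lemma Mp_E: "Mp M1 M2 p \<subseteq> E"
  using m1 m2 unfolding Mp_def matching_def by auto

lemma Mp_match: "e \<in> Mp M1 M2 p \<Longrightarrow> e' \<in> Mp M1 M2 p \<Longrightarrow> e \<noteq> e' \<Longrightarrow> e \<inter> e' = {}"
  using m1 m2 unfolding Mp_def matching_def by (cases p) auto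

lemma E_ne: "{a,b} \<in> E \<Longrightarrow> a \<noteq> b"
proof
  assume h: "{a,b} \<in> E" "a = b"
  have "\<forall>e\<in>E. \<exists>x y. x \<noteq> y \<and> e = {x, y}" using sg unfolding simple_graph_def by blast
  then obtain u v where "u \<noteq> v" "{a,a} = {u,v}" using h by blast
  then show False by (metis insertCI singletonD insert_absorb2)
qed

lemma E_V: "{a,b} \<in> E \<Longrightarrow> a \<in> V \<and> b \<in> V"
proof -
  assume "{a,b} \<in> E"
  then obtain u v where "u \<in> V" "v \<in> V" "{a,b} = {u,v}" using sg unfolding simple_graph_def by blast
  then show ?thesis by (auto simp: doubleton_eq_iff)
qed

lemma Mp_uniq: "{a,b} \<in> Mp M1 M2 p \<Longrightarrow> {a,c} \<in> Mp M1 M2 p \<Longrightarrow> b = c"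
proof -
  assume h: "{a,b} \<in> Mp M1 M2 p" "{a,c} \<in> Mp M1 M2 p"
  have "a \<noteq> b" using E_ne h(1) Mp_E by blast
  moreover have "{a,b} = {a,c}" using Mp_match[OF h] by blast
  ultimately show "b = c" by (metis doubleton_eq_iff)
qed

lemma nb_iff: "N p a = Some b \<longleftrightarrow> {a,b} \<in> Mp M1 M2 p"
proof
  assume "N p a = Some b"
  then have ex: "\<exists>b. {a,b} \<in> Mp M1 M2 p" and b: "b = (THE b. {a,b} \<in> Mp M1 M2 p)"
    unfolding nb_def by (auto split: if_splits)
  then obtain c where c: "{a,c} \<in> Mp M1 M2 p" by blast
  have "(THE b. {a,b} \<in> Mp M1 M2 p) = c" using c Mp_uniq by blast
  then show "{a,b} \<in> Mp M1 M2 p" using b c by simp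
next
  assume h: "{a,b} \<in> Mp M1 M2 p"
  have "(THE b. {a,b} \<in> Mp M1 M2 p) = b" using h Mp_uniq by blast
  then show "N p a = Some b" using h unfolding nb_def by auto
qed

lemma nb_sym: "N p a = Some b \<Longrightarrow> N p b = Some a"
  by (simp add: nb_iff insert_commute)

lemma nb_irr: "N p a \<noteq> Some a"
  using nb_iff Mp_E E_ne by blast

lemma nb_excl: "N True a = Some b \<Longrightarrow> N False a \<noteq> Some b"
  using nb_iff unfolding Mp_def by auto

lemma D_iff: "{a,b} \<in> D \<longleftrightarrow> N True a = Some b \<or> N False a = Some b"
  unfolding nb_iff Mp_def sym_diff_def by auto

lemma f_pos: "f (int k) = fwd N x k" unfolding wlk_def by simp
lemma nat_aux: "nat (int n + 1) = Suc n" by simp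

lemma f_neg: "f (- int k) = bwd N x k" unfolding wlk_def by (cases k) (auto simp: nat_aux)

lemma S1: "f i = Some a \<Longrightarrow> f (i+1) = N (even i) a"
proof (cases "0 \<le> i")
  case True
  then obtain k where k: "i = int k" using nonneg_eq_int[OF True] by blast
  assume "f i = Some a"
  moreover have "f (i+1) = fwd N x (Suc k)" using f_pos[of "Suc k"] k by (simp add: ac_simps)
  ultimately show ?thesis using f_pos[of k] k by simp
next
  case False
  define k where "k = nat (-i - 1)"
  have k: "i = - int (Suc k)" using False k_def by simp
  assume h: "f i = Some a"
  then have "bwd N x (Suc k) = Some a" using f_neg[of "Suc k"] k by simp
  then obtain c where c: "bwd N x k = Some c" "N (odd k) c = Some a" by (cases "bwd N x k") auto
  have "f (i+1) = bwd N x k" using f_neg[of k] k by simp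
  moreover have "even i = odd k" using k by simp
  moreover have "N (odd k) a = Some c" using c(2) by (rule nb_sym)
  ultimately show ?thesis using c by simp
qed

lemma S2: "f (i+1) = Some b \<Longrightarrow> f i = N (even i) b"
proof (cases "0 \<le> i")
  case True
  then obtain k where k: "i = int k" using nonneg_eq_int[OF True] by blast
  assume h: "f (i+1) = Some b"
  then have "fwd N x (Suc k) = Some b" using f_pos[of "Suc k"] k by (simp add: ac_simps)
  then obtain c where c: "fwd N x k = Some c" "N (even k) c = Some b" by (cases "fwd N x k") auto
  moreover have "N (even k) b = Some c" using c(2) by (rule nb_sym)
  ultimately show ?thesis using f_pos[of k] k by simp
next
  case False
  define k where "k = nat (-i - 1)"
  have k: "i = - int (Suc k)" using False k_def by simp
  assume h: "f (i+1) = Some b"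
  have "f (i+1) = bwd N x k" using f_neg[of k] k by simp
  moreover have "f i = bwd N x (Suc k)" using f_neg[of "Suc k"] k by simp
  moreover have "even i = odd k" using k by simp
  ultimately show ?thesis using h by (simp del: bwd.simps) (metis bind.simps(2) bwd.simps(2))
qed

lemma f0: "f 0 = Some x" unfolding wlk_def by simp

lemma dom_up_nat: "fwd N x k \<noteq> None \<Longrightarrow> m \<le> k \<Longrightarrow> fwd N x m \<noteq> None"
proof (induction k)
  case 0 then show ?case by simp
next
  case (Suc k)
  have "fwd N x k \<noteq> None" using Suc.prems(1) by (cases "fwd N x k") auto
  then show ?case using Suc by (cases "m = Suc k") (auto simp: le_Suc_eq)
qed

lemma dom_dn_nat: "bwd N x k \<noteq> None \<Longrightarrow> m \<le> k \<Longrightarrow> bwd N x m \<noteq> None"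
proof (induction k)
  case 0 then show ?case by simp
next
  case (Suc k)
  have "bwd N x k \<noteq> None" using Suc.prems(1) by (cases "bwd N x k") auto
  then show ?case using Suc by (cases "m = Suc k") (auto simp: le_Suc_eq)
qed

lemma interval: "f i \<noteq> None \<Longrightarrow> f k \<noteq> None \<Longrightarrow> i \<le> j \<Longrightarrow> j \<le> k \<Longrightarrow> f j \<noteq> None"
proof (cases "0 \<le> j")
  case True
  assume h: "f k \<noteq> None" "j \<le> k"
  have "fwd N x (nat k) \<noteq> None" using h True unfolding wlk_def by simp
  then have "fwd N x (nat j) \<noteq> None" using dom_up_nat[of "nat k" "nat j"] h True by simp
  then show ?thesis using True unfolding wlk_def by simp
next
  case False
  assume h: "f i \<noteq> None" "i \<le> j"
  have "bwd N x (nat (-i)) \<noteq> None" using h False unfolding wlk_def by (cases "0 \<le> i") simp_all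
  then have "bwd N x (nat (-j)) \<noteq> None" using dom_dn_nat[of "nat (-i)" "nat (-j)"] h False by simp
  then show ?thesis using False unfolding wlk_def by simp
qed

lemma zzz_end: True by simp
end



context ctx begin

abbreviation R where "R \<equiv> (\<lambda>a b. {a, b} \<in> D)\<^sup>*\<^sup>* x"
definition Wf where "Wf = {a. \<exists>i. f i = Some a}"
definition WE where "WE = {{a,b} | a b. \<exists>i. f i = Some a \<and> f (i+1) = Some b}"
definition AA where "AA = {v\<in>Wf. misses M1 v}"
definition BB where "BB = {v\<in>Wf. misses M2 v}"

lemma step_D: "f i = Some a \<Longrightarrow> f (i+1) = Some b \<Longrightarrow> {a,b} \<in> D"
  using S1[of i a] D_iff by (cases "even i") auto

lemma fS: "f i \<noteq> None \<Longrightarrow> \<exists>a. f i = Some a" by auto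

lemma Wf_R_pos: "f (int k) = Some a \<Longrightarrow> R a"
proof (induction k arbitrary: a)
  case 0 then show ?case using f0 by simp
next
  case (Suc k)
  have "f (int k) \<noteq> None" using interval[of 0 "int (Suc k)" "int k"] f0 Suc.prems by simp
  then obtain c where c: "f (int k) = Some c" by auto
  have "{c,a} \<in> D" using step_D[of "int k" c a] c Suc.prems by (simp add: ac_simps)
  then show ?case using Suc.IH[OF c] by (simp add: rtranclp.rtrancl_into_rtrancl)
qed

lemma Wf_R_neg: "f (- int k) = Some a \<Longrightarrow> R a"
proof (induction k arbitrary: a)
  case 0 then show ?case using f0 by simp
next
  case (Suc k)
  have "f (- int k) \<noteq> None" using interval[of "- int (Suc k)" 0 "- int k"] f0 Suc.prems by simp
  then obtain c where c: "f (- int k) = Some c" by auto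
  have "{a,c} \<in> D" using step_D[of "- int (Suc k)" a c] c Suc.prems by simp
  then have "{c,a} \<in> D" by (simp add: insert_commute)
  then show ?case using Suc.IH[OF c] by (simp add: rtranclp.rtrancl_into_rtrancl)
qed

lemma Wf_R: "f i = Some a \<Longrightarrow> R a"
proof (cases "0 \<le> i")
  case True
  then obtain k where "i = int k" using nonneg_eq_int[OF True] by blast
  then show "f i = Some a \<Longrightarrow> R a" using Wf_R_pos by simp
next
  case False
  then have "i = - int (nat (-i))" by simp
  then show "f i = Some a \<Longrightarrow> R a" using Wf_R_neg by metis
qed

lemma fm1: "f i = Some a \<Longrightarrow> f (i - 1) = N (even (i - 1)) a"
  using S2[of "i - 1" a] by simp

lemma nbr: "f i = Some a \<Longrightarrow> {a,b} \<in> D \<Longrightarrow> f (i+1) = Some b \<or> f (i - 1) = Some b"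
proof -
  assume h: "f i = Some a" "{a,b} \<in> D"
  have 1: "f (i+1) = N (even i) a" using S1 h(1) .
  have 2: "f (i - 1) = N (even (i - 1)) a" using fm1 h(1) .
  have "even (i - 1) \<longleftrightarrow> \<not> even i" by simp
  then show ?thesis using 1 2 h(2) D_iff by (cases "even i") auto
qed

lemma R_Wf: "R y \<Longrightarrow> y \<in> Wf"
proof (induction rule: rtranclp_induct)
  case base then show ?case using f0 unfolding Wf_def by blast
next
  case (step y z)
  then obtain i where "f i = Some y" unfolding Wf_def by blast
  then show ?case using nbr step(2) unfolding Wf_def by blast
qed

lemma DE: "D \<subseteq> E" using m1 m2 unfolding matching_def sym_diff_def by blast

lemma C_eq: "{e\<in>D. \<exists>y\<in>e. R y} = WE"
proof
  show "{e\<in>D. \<exists>y\<in>e. R y} \<subseteq> WE"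
  proof
    fix e assume "e \<in> {e\<in>D. \<exists>y\<in>e. R y}"
    then obtain y where e: "e \<in> D" "y \<in> e" "R y" by blast
    obtain i where i: "f i = Some y" using R_Wf[OF e(3)] unfolding Wf_def by blast
    obtain z where z: "e = {y,z}" using edge_form2[OF sg _ e(2)] e(1) DE by blast
    have "f (i+1) = Some z \<or> f (i - 1) = Some z" using nbr i e(1) z by blast
    then show "e \<in> WE"
    proof
      assume "f (i+1) = Some z" then show ?thesis using i z unfolding WE_def by blast
    next
      assume "f (i - 1) = Some z"
      moreover have "f (i - 1 + 1) = Some y" using i by simp
      ultimately have "{z,y} \<in> WE" unfolding WE_def by blast
      then show ?thesis using z by (simp add: insert_commute)
    qed
  qed
next
  show "WE \<subseteq> {e\<in>D. \<exists>y\<in>e. R y}"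
  proof
    fix e assume "e \<in> WE"
    then obtain a b i where e: "e = {a,b}" "f i = Some a" "f (i+1) = Some b" unfolding WE_def by blast
    have "e \<in> D" using step_D e by simp
    moreover have "R a" using Wf_R e by simp
    ultimately show "e \<in> {e\<in>D. \<exists>y\<in>e. R y}" using e by blast
  qed
qed

lemma x_nbr: "f 1 \<noteq> None \<or> f (-1) \<noteq> None"
proof -
  obtain e where e: "e \<in> D" "x \<in> e" using x by blast
  obtain z where z: "e = {x,z}" using edge_form2[OF sg _ e(2)] e(1) DE by blast
  have "f 1 = N True x" using S1[of 0 x] f0 by simp
  moreover have "f (-1) = N False x" using fm1[of 0 x] f0 by simp
  ultimately show ?thesis using D_iff[of x z] e z by auto
qed

lemma has_nbr: "f i \<noteq> None \<Longrightarrow> f (i+1) \<noteq> None \<or> f (i - 1) \<noteq> None"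
proof -
  assume h: "f i \<noteq> None"
  consider "i > 0" | "i = 0" | "i < 0" by linarith
  then show ?thesis
  proof cases
    case 1 then show ?thesis using interval[of 0 i "i - 1"] h f0 by simp
  next
    case 2 then show ?thesis using x_nbr by simp
  next
    case 3 then show ?thesis using interval[of i 0 "i + 1"] h f0 by simp
  qed
qed

lemma Wf_D: "a \<in> Wf \<Longrightarrow> \<exists>d\<in>D. a \<in> d"
proof -
  assume "a \<in> Wf"
  then obtain i where i: "f i = Some a" unfolding Wf_def by blast
  then have "f (i+1) \<noteq> None \<or> f (i - 1) \<noteq> None" using has_nbr by simp
  then show ?thesis
  proof
    assume "f (i+1) \<noteq> None"
    then obtain b where "f (i+1) = Some b" by auto
    then show ?thesis using step_D i by blast
  next
    assume "f (i - 1) \<noteq> None"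
    then obtain b where "f (i - 1) = Some b" by auto
    moreover have "f (i - 1 + 1) = Some a" using i by simp
    ultimately show ?thesis using step_D by blast
  qed
qed

lemma UWE: "\<Union>WE = Wf"
proof
  show "\<Union>WE \<subseteq> Wf" unfolding WE_def Wf_def by auto
next
  show "Wf \<subseteq> \<Union>WE"
    using Wf_D C_eq Wf_R unfolding Wf_def by blast
qed

lemma Wf_V: "Wf \<subseteq> V"
proof
  fix a assume "a \<in> Wf"
  then obtain d where d: "d \<in> D" "a \<in> d" using Wf_D by blast
  then obtain z where "d = {a,z}" using edge_form2[OF sg _ d(2)] DE by blast
  then show "a \<in> V" using E_V d DE by blast
qed

lemma covered: "N p a = Some b \<Longrightarrow> \<not> misses (if p then M1 else M2) a"
  using nb_iff[of p a b] unfolding Mp_def misses_def by (cases p) auto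

lemma end_miss: "a \<in> Wf \<Longrightarrow> N p a = None \<Longrightarrow> misses (if p then M1 else M2) a"
proof -
  assume a: "a \<in> Wf" and n: "N p a = None"
  obtain d where d: "d \<in> D" "a \<in> d" using Wf_D a by blast
  show ?thesis unfolding misses_def
  proof (rule ballI, rule notI)
    fix e assume e: "e \<in> (if p then M1 else M2)" "a \<in> e"
    have eE: "e \<in> E" using e m1 m2 unfolding matching_def by (cases p) auto
    obtain b where b: "e = {a,b}" using edge_form2[OF sg eE e(2)] by blast
    show False
    proof (cases "e \<in> (if p then M2 else M1)")
      case True
      then have "e \<in> M1" "e \<in> M2" using e by (cases p; auto)+
      then have "d \<noteq> e" using d unfolding sym_diff_def by blast
      then show False using d e \<open>e \<in> M1\<close> \<open>e \<in> M2\<close> m1 m2 unfolding sym_diff_def matching_def by blast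
    next
      case False
      then have "{a,b} \<in> Mp M1 M2 p" using e b unfolding Mp_def by (cases p) auto
      then have "N p a = Some b" by (simp add: nb_iff)
      with n show False by simp
    qed
  qed
qed

lemma AB_disj: "AA \<inter> BB = {}"
  using Wf_D unfolding AA_def BB_def misses_def sym_diff_def by blast

lemma interior: "f i = Some a \<Longrightarrow> f (i+1) \<noteq> None \<Longrightarrow> f (i - 1) \<noteq> None \<Longrightarrow> a \<notin> AA \<union> BB"
proof -
  assume h: "f i = Some a" "f (i+1) \<noteq> None" "f (i - 1) \<noteq> None"
  obtain b c where b: "N (even i) a = Some b" and c: "N (even (i - 1)) a = Some c"
    using h S1[OF h(1)] fm1[OF h(1)] by auto
  have "even (i - 1) \<longleftrightarrow> \<not> even i" by simp
  then have "\<not> misses M1 a \<and> \<not> misses M2 a"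
    using covered[OF b] covered[OF c] by (cases "even i") auto
  then show ?thesis unfolding AA_def BB_def by blast
qed

lemma end_up: "f i = Some a \<Longrightarrow> f (i+1) = None \<Longrightarrow> a \<in> (if even i then AA else BB)"
proof -
  assume h: "f i = Some a" "f (i+1) = None"
  have a: "a \<in> Wf" using h unfolding Wf_def by blast
  have "N (even i) a = None" using S1[OF h(1)] h(2) by simp
  from end_miss[OF a this] a show ?thesis unfolding AA_def BB_def by (cases "even i") auto
qed

lemma end_dn: "f i = Some a \<Longrightarrow> f (i - 1) = None \<Longrightarrow> a \<in> (if even (i - 1) then AA else BB)"
proof -
  assume h: "f i = Some a" "f (i - 1) = None"
  have a: "a \<in> Wf" using h unfolding Wf_def by blast
  have "N (even (i - 1)) a = None" using fm1[OF h(1)] h(2) by simp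
  from end_miss[OF a this] a show ?thesis unfolding AA_def BB_def by (cases "even (i - 1)") auto
qed

lemma alt: "f i = Some a \<Longrightarrow> f (i+1) = Some b \<Longrightarrow> ({a,b} \<in> M1 \<longleftrightarrow> even i) \<and> ({a,b} \<in> M2 \<longleftrightarrow> odd i)"
  using S1[of i a] nb_iff[of "even i" a b] unfolding Mp_def by (cases "even i") auto

end



context ctx begin

lemma fall: "\<forall>m. f m \<noteq> None \<Longrightarrow> f m = Some (the (f m))" by auto

lemma cycle_case:
  assumes ex: "\<exists>d. 0 < d \<and> (\<exists>i. f i \<noteq> None \<and> f (i + int d) = f i)"
  shows "alt_even_cycle M1 M2 WE"
proof -
  define P where "P d \<longleftrightarrow> 0 < d \<and> (\<exists>i. f i \<noteq> None \<and> f (i + int d) = f i)" for d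
  define p where "p = (LEAST d. P d)"
  have Pp: "P p" unfolding p_def by (rule LeastI_ex) (use ex P_def in blast)
  have minp: "f (i + int d) \<noteq> f i" if "0 < d" "d < p" "f i \<noteq> None" for d i
    using not_less_Least[of d P] that unfolding p_def P_def by blast
  obtain i0 a where i0: "f i0 = Some a" "f (i0 + int p) = Some a" and p0: "0 < p"
    using Pp unfolding P_def by auto
  have dom: "f j \<noteq> None" if "i0 \<le> j" "j \<le> i0 + int p" for j
    using interval[of i0 "i0 + int p" j] i0 that by simp
  have ep: "even p"
  proof (rule ccontr)
    assume op: "odd p"
    have A1: "f (i0 + int p - 1) = N (even (i0 + int p - 1)) a" using fm1[OF i0(2)] by simp
    have A2: "f (i0 + 1) = N (even i0) a" using S1[OF i0(1)] .
    have "even (i0 + int p - 1) = even i0" using op by simp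
    then have eq: "f (i0 + 1) = f (i0 + int p - 1)" using A1 A2 by simp
    show False
    proof (cases "p = 1")
      case True
      then have "N (even i0) a = Some a" using A2 i0(2) by simp
      then show False using nb_irr by simp
    next
      case False
      then have p3: "p \<ge> 3" using op p0 by presburger
      have "f (i0 + 1) \<noteq> None" using dom[of "i0+1"] p0 by simp
      moreover have "f (i0 + 1 + int (p - 2)) = f (i0 + 1)" using eq p3 by (simp add: of_nat_diff algebra_simps)
      ultimately show False using minp[of "p - 2" "i0 + 1"] p3 by simp
    qed
  qed
  have p2: "p \<noteq> 2"
  proof
    assume pp: "p = 2"
    obtain b where b: "f (i0 + 1) = Some b" using dom[of "i0+1"] pp by auto
    have B1: "N (even i0) a = Some b" using S1[OF i0(1)] b by simp
    have "f (i0 + 1 + 1) = Some a" using i0(2) pp by (simp add: algebra_simps)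
    then have "f (i0 + 1) = N (even (i0 + 1)) a" using S2[of "i0+1" a] by simp
    then have B2: "N (\<not> even i0) a = Some b" using b by simp
    show False using B1 B2 nb_excl by (cases "even i0") auto
  qed
  have p4: "p \<ge> 4" using ep p0 p2 by presburger
  have up: "f (i0 + int k) \<noteq> None \<and> f (i0 + int k + int p) = f (i0 + int k)" for k
  proof (induction k rule: less_induct)
    case (less k)
    show ?case
    proof (cases k)
      case 0 then show ?thesis using i0 by simp
    next
      case (Suc k')
      then obtain c where c: "f (i0 + int k') = Some c" "f (i0 + int k' + int p) = Some c"
        using less[of k'] by auto
      have "f (i0 + int k' + 1) = N (even (i0 + int k')) c" using S1[OF c(1)] .
      moreover have "f (i0 + int k' + int p + 1) = N (even (i0 + int k' + int p)) c" using S1[OF c(2)] .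
      moreover have "even (i0 + int k' + int p) = even (i0 + int k')" using ep by simp
      ultimately have eq: "f (i0 + int k + int p) = f (i0 + int k)" using Suc by (simp add: algebra_simps)
      have "f (i0 + int k) \<noteq> None"
      proof (cases "k \<le> p")
        case True then show ?thesis using dom by simp
      next
        case False
        then have "k - p < k" "i0 + int (k - p) + int p = i0 + int k" using p0 by (auto simp: of_nat_diff)
        then show ?thesis using less[of "k - p"] by metis
      qed
      then show ?thesis using eq by simp
    qed
  qed
  have dn: "f (i0 - int k) \<noteq> None \<and> f (i0 - int k + int p) = f (i0 - int k)" for k
  proof (induction k rule: less_induct)
    case (less k)
    show ?case
    proof (cases k)
      case 0 then show ?thesis using i0 by simp
    next
      case (Suc k')
      then obtain c where c: "f (i0 - int k') = Some c" "f (i0 - int k' + int p) = Some c"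
        using less[of k'] by auto
      have "f (i0 - int k' - 1) = N (even (i0 - int k' - 1)) c" using fm1[OF c(1)] .
      moreover have "f (i0 - int k' + int p - 1) = N (even (i0 - int k' + int p - 1)) c" using fm1[OF c(2)] .
      moreover have "even (i0 - int k' + int p - 1) = even (i0 - int k' - 1)" using ep by simp
      ultimately have eq: "f (i0 - int k + int p) = f (i0 - int k)" using Suc by (simp add: algebra_simps)
      have "f (i0 - int k + int p) \<noteq> None"
      proof (cases "k \<le> p")
        case True then show ?thesis using dom by simp
      next
        case False
        then have "k - p < k" "i0 - int (k - p) = i0 - int k + int p" using p0 by (auto simp: of_nat_diff)
        then show ?thesis using less[of "k - p"] by metis
      qed
      then show ?thesis using eq by simp
    qed
  qed
  have per: "f m \<noteq> None \<and> f (m + int p) = f m" for m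
  proof (cases "i0 \<le> m")
    case True
    then have "m = i0 + int (nat (m - i0))" by simp
    then show ?thesis using up[of "nat (m - i0)"] by metis
  next
    case False
    then have "m = i0 - int (nat (i0 - m))" by simp
    then show ?thesis using dn[of "nat (i0 - m)"] by metis
  qed
  have perq: "f (m + int q * int p) = f m" for m q
  proof (induction q)
    case 0 then show ?case by simp
  next
    case (Suc q)
    have "f (m + int (Suc q) * int p) = f (m + int q * int p + int p)" by (simp add: algebra_simps)
    also have "\<dots> = f (m + int q * int p)" using per by simp
    finally show ?case using Suc by simp
  qed
  have perz: "f (m + q * int p) = f m" for m q
  proof (cases "0 \<le> q")
    case True
    then show ?thesis using perq[of m "nat q"] by simp
  next
    case False
    have "f (m + q * int p + int (nat (-q)) * int p) = f (m + q * int p)" by (rule perq)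
    moreover have "m + q * int p + int (nat (-q)) * int p = m" using False by (simp add: algebra_simps)
    ultimately show ?thesis by metis
  qed
  define g where "g k = the (f k)" for k
  have fg: "f k = Some (g k)" for k using per[of k] unfolding g_def by auto
  have gp: "g (k + int p) = g k" for k using per[of k] unfolding g_def by simp
  define xs where "xs = map (\<lambda>k. g (int k)) [0..<p]"
  have len: "length xs = p" unfolding xs_def by simp
  have dist: "distinct xs"
  proof -
    have "inj_on (\<lambda>k. g (int k)) {0..<p}"
    proof (rule inj_onI)
      fix k l assume kl: "k \<in> {0..<p}" "l \<in> {0..<p}" "g (int k) = g (int l)"
      have fkl: "f (int k) = f (int l)" using fg kl(3) by metis
      show "k = l"
      proof (rule ccontr)
        assume "k \<noteq> l"
        then consider "k < l" | "l < k" by linarith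
        then show False
        proof cases
          case 1
          have "f (int k + int (l - k)) = f (int k)" using 1 fkl by (simp add: of_nat_diff)
          moreover have "l - k < p" "0 < l - k" using 1 kl by auto
          ultimately show False using minp[of "l - k" "int k"] fg by simp
        next
          case 2
          have "f (int l + int (k - l)) = f (int l)" using 2 fkl by (simp add: of_nat_diff)
          moreover have "k - l < p" "0 < k - l" using 2 kl by auto
          ultimately show False using minp[of "k - l" "int l"] fg by simp
        qed
      qed
    qed
    then show ?thesis unfolding xs_def by (simp add: distinct_map)
  qed
  have x0: "xs ! 0 = g 0" and x1: "xs ! 1 = g 1" unfolding xs_def using p4 by auto
  have ys: "xs @ [xs ! 0] = map (\<lambda>k. g (int k)) [0..<Suc p]"
    using x0 gp[of 0] unfolding xs_def by simp
  have zs: "xs @ [xs ! 0, xs ! 1] = map (\<lambda>k. g (int k)) [0..<Suc (Suc p)]"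
    using x0 x1 gp[of 0] gp[of 1] unfolding xs_def by (simp add: add.commute)
  have we: "walk_edges (xs @ [xs ! 0]) = WE"
  proof
    show "walk_edges (xs @ [xs ! 0]) \<subseteq> WE"
    proof
      fix e assume "e \<in> walk_edges (xs @ [xs ! 0])"
      then obtain i where i: "i < p" "e = {g (int i), g (int i + 1)}"
        unfolding walk_edges_def ys by (auto simp: nth_append simp del: upt_Suc) (metis add.commute)
      then show "e \<in> WE" unfolding WE_def using fg by blast
    qed
  next
    show "WE \<subseteq> walk_edges (xs @ [xs ! 0])"
    proof
      fix e assume "e \<in> WE"
      then obtain a b i where e: "e = {a,b}" "f i = Some a" "f (i+1) = Some b" unfolding WE_def by blast
      define k where "k = nat (i mod int p)"
      have ik: "int k = i mod int p" using p0 unfolding k_def by auto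
      have "i mod int p < int p" using p0 by simp
      then have kp: "k < p" using ik by linarith
      have "i = int k + (i div int p) * int p" using ik by simp
      then have "f i = f (int k)" "f (i+1) = f (int k + 1)"
        using perz[of "int k" "i div int p"] perz[of "int k + 1" "i div int p"] by (metis, metis add.commute add.left_commute)
      then have "a = g (int k)" "b = g (int k + 1)" using e fg by auto
      then show "e \<in> walk_edges (xs @ [xs ! 0])"
        unfolding walk_edges_def ys using e kp by (auto simp del: upt_Suc simp: add.commute intro!: exI[of _ k])
    qed
  qed
  have altg: "({g i, g (i+1)} \<in> M1 \<longleftrightarrow> even i) \<and> ({g i, g (i+1)} \<in> M2 \<longleftrightarrow> odd i)" for i
    using alt[OF fg[of i] fg[of "i+1"]] .
  define h where "h k = g (int k)" for k
  have zs': "xs @ [xs ! 0, xs ! 1] = map h [0..<Suc (Suc p)]" unfolding h_def by (rule zs)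
  have alth: "({h k, h (Suc k)} \<in> M1 \<longleftrightarrow> even k) \<and> ({h k, h (Suc k)} \<in> M2 \<longleftrightarrow> odd k)" for k
    using altg[of "int k"] unfolding h_def by (simp add: add.commute)
  have nth_h: "map h [0..<Suc (Suc p)] ! j = h j" if "j < Suc (Suc p)" for j
    using that by (simp del: upt_Suc)
  have wa1: "walk_alternating M1 (xs @ [xs ! 0, xs ! 1])"
    unfolding walk_alternating_def zs'
  proof (intro allI impI)
    fix i assume "Suc (Suc i) < length (map h [0..<Suc (Suc p)])"
    then have "Suc (Suc i) < Suc (Suc p)" by simp
    then show "({map h [0..<Suc (Suc p)] ! i, map h [0..<Suc (Suc p)] ! Suc i} \<in> M1) =
               ({map h [0..<Suc (Suc p)] ! Suc i, map h [0..<Suc (Suc p)] ! Suc (Suc i)} \<notin> M1)"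
      using nth_h alth[of i] alth[of "Suc i"] by simp
  qed
  have wa2: "walk_alternating M2 (xs @ [xs ! 0, xs ! 1])"
    unfolding walk_alternating_def zs'
  proof (intro allI impI)
    fix i assume "Suc (Suc i) < length (map h [0..<Suc (Suc p)])"
    then have "Suc (Suc i) < Suc (Suc p)" by simp
    then show "({map h [0..<Suc (Suc p)] ! i, map h [0..<Suc (Suc p)] ! Suc i} \<in> M2) =
               ({map h [0..<Suc (Suc p)] ! Suc i, map h [0..<Suc (Suc p)] ! Suc (Suc i)} \<notin> M2)"
      using nth_h alth[of i] alth[of "Suc i"] by simp
  qed
  show ?thesis unfolding alt_even_cycle_def
    using dist len p4 ep we wa1 wa2 by (intro exI[of _ xs]) auto
qed

end



context ctx begin

lemma one_pt:
  assumes keq: "card (AA \<inter> X) = card (BB \<inter> X)" and u: "u \<in> AA \<union> BB" "AA \<union> BB \<subseteq> {u}" "u \<in> X"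
  shows False
proof -
  have d: "AA \<inter> BB = {}" by (rule AB_disj)
  show False
  proof (cases "u \<in> AA")
    case True
    then have "AA \<inter> X = {u}" "BB \<inter> X = {}" using u d by auto
    then show False using keq by simp
  next
    case False
    then have "BB \<inter> X = {u}" "AA \<inter> X = {}" using u d by auto
    then show False using keq by simp
  qed
qed

lemma fin_path:
  assumes lo: "lo < hi" and dom: "\<And>i. f i \<noteq> None \<longleftrightarrow> lo \<le> i \<and> i \<le> hi"
    and inj: "\<And>i j a. f i = Some a \<Longrightarrow> f j = Some a \<Longrightarrow> i = j"
    and ev: "even (hi - lo)"
    and lay: "\<exists>n. the (f lo) \<in> B n \<and> the (f hi) \<in> B n \<and>
             (n = 0 \<or> (the (f lo) \<notin> B (n - 1) \<and> the (f hi) \<notin> B (n - 1)))"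
  shows "alt_even_path_same_layer B M1 M2 WE"
proof -
  define g where "g k = the (f k)" for k
  have fg: "lo \<le> k \<Longrightarrow> k \<le> hi \<Longrightarrow> f k = Some (g k)" for k using dom[of k] unfolding g_def by auto
  define L where "L = nat (hi - lo)"
  have hiL: "hi = lo + int L" using lo unfolding L_def by simp
  define h where "h k = g (lo + int k)" for k
  define xs where "xs = map h [0..<Suc L]"
  have len: "length xs = Suc L" unfolding xs_def by simp
  have nth: "xs ! k = h k" if "k < Suc L" for k using that unfolding xs_def by (simp del: upt_Suc)
  have dist: "distinct xs"
  proof -
    have "inj_on h {0..<Suc L}"
    proof (rule inj_onI)
      fix k l assume kl: "k \<in> {0..<Suc L}" "l \<in> {0..<Suc L}" "h k = h l"
      have "f (lo + int k) = Some (h k)" "f (lo + int l) = Some (h l)"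
        using kl fg hiL unfolding h_def by auto
      then have "lo + int k = lo + int l" using inj kl(3) by metis
      then show "k = l" by simp
    qed
    then show ?thesis unfolding xs_def by (simp add: distinct_map del: upt_Suc)
  qed
  have alth: "({h k, h (Suc k)} \<in> M1 \<longleftrightarrow> even (lo + int k)) \<and> ({h k, h (Suc k)} \<in> M2 \<longleftrightarrow> odd (lo + int k))"
    if "k < L" for k
  proof -
    have "f (lo + int k) = Some (h k)" "f (lo + int k + 1) = Some (h (Suc k))"
      using fg hiL that unfolding h_def by (auto simp: algebra_simps)
    then show ?thesis using alt by blast
  qed
  have wa1: "walk_alternating M1 xs" unfolding walk_alternating_def
  proof (intro allI impI)
    fix i assume "Suc (Suc i) < length xs"
    then have i: "Suc (Suc i) < Suc L" using len by simp
    then show "({xs ! i, xs ! Suc i} \<in> M1) = ({xs ! Suc i, xs ! Suc (Suc i)} \<notin> M1)"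
      using nth alth[of i] alth[of "Suc i"] by simp
  qed
  have wa2: "walk_alternating M2 xs" unfolding walk_alternating_def
  proof (intro allI impI)
    fix i assume "Suc (Suc i) < length xs"
    then have i: "Suc (Suc i) < Suc L" using len by simp
    then show "({xs ! i, xs ! Suc i} \<in> M2) = ({xs ! Suc i, xs ! Suc (Suc i)} \<notin> M2)"
      using nth alth[of i] alth[of "Suc i"] by simp
  qed
  have we: "walk_edges xs = WE"
  proof
    show "walk_edges xs \<subseteq> WE"
    proof
      fix e assume "e \<in> walk_edges xs"
      then obtain k where k: "Suc k < Suc L" "e = {xs ! k, xs ! Suc k}" unfolding walk_edges_def len by auto
      then have "e = {h k, h (Suc k)}" using nth by simp
      moreover have "f (lo + int k) = Some (h k)" "f (lo + int k + 1) = Some (h (Suc k))"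
        using fg hiL k unfolding h_def by (auto simp: algebra_simps)
      ultimately show "e \<in> WE" unfolding WE_def by blast
    qed
  next
    show "WE \<subseteq> walk_edges xs"
    proof
      fix e assume "e \<in> WE"
      then obtain a b i where e: "e = {a,b}" "f i = Some a" "f (i+1) = Some b" unfolding WE_def by blast
      have r: "lo \<le> i" "i + 1 \<le> hi" using dom[of i] dom[of "i+1"] e by auto
      define k where "k = nat (i - lo)"
      have ik: "i = lo + int k" using r unfolding k_def by simp
      have kL: "k < L" using r hiL ik by simp
      have "a = h k" "b = h (Suc k)" using e fg r ik unfolding h_def by (auto simp: algebra_simps)
      then have "e = {xs ! k, xs ! Suc k}" using nth kL e by simp
      then show "e \<in> walk_edges xs" unfolding walk_edges_def len using kL by auto
    qed
  qed
  have hd: "hd xs = g lo" unfolding xs_def h_def by (simp add: hd_map del: upt_Suc)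
  have ne: "xs \<noteq> []" using len by auto
  have last: "last xs = g hi" using nth[of L] len hiL ne unfolding h_def by (simp add: last_conv_nth)
  have L1: "L \<ge> 1" using lo unfolding L_def by simp
  show ?thesis unfolding alt_even_path_same_layer_def
    using dist len L1 we wa1 wa2 hd last lay ev hiL unfolding g_def
    by (intro exI[of _ xs]) auto
qed

end



context ctx begin

lemma dray:
  assumes all: "\<And>i. f i \<noteq> None"
    and inj: "\<And>i j a. f i = Some a \<Longrightarrow> f j = Some a \<Longrightarrow> i = j"
  shows "alt_double_ray M1 M2 WE"
proof -
  define g where "g k = the (f k)" for k
  have fg: "f k = Some (g k)" for k using all[of k] unfolding g_def by auto
  have ig: "inj g"
  proof (rule injI)
    fix i j assume "g i = g j"
    then show "i = j" using inj fg by metis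
  qed
  have we: "WE = range (\<lambda>i. {g i, g (i + 1)})"
    unfolding WE_def using fg by auto
  have altg: "({g i, g (i+1)} \<in> M1 \<longleftrightarrow> even i) \<and> ({g i, g (i+1)} \<in> M2 \<longleftrightarrow> odd i)" for i
    using alt[OF fg[of i] fg[of "i+1"]] .
  have a1: "{g i, g (i + 1)} \<in> M1 \<longleftrightarrow> {g (i + 1), g (i + 2)} \<notin> M1" for i
    using altg[of i] altg[of "i+1"] by (simp add: add.assoc)
  have a2: "{g i, g (i + 1)} \<in> M2 \<longleftrightarrow> {g (i + 1), g (i + 2)} \<notin> M2" for i
    using altg[of i] altg[of "i+1"] by (simp add: add.assoc)
  show ?thesis unfolding alt_double_ray_def using ig we a1 a2 by blast
qed

lemma noncycle:
  assumes noP: "\<not> (\<exists>d. 0 < d \<and> (\<exists>i. f i \<noteq> None \<and> f (i + int d) = f i))"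
    and keq: "\<And>n. card (AA \<inter> B n) = card (BB \<inter> B n)"
    and Bmono: "\<And>n. B n \<subseteq> B (Suc n)"
    and Bcov: "\<And>v. v \<in> Wf \<Longrightarrow> \<exists>n. v \<in> B n"
  shows "alt_double_ray M1 M2 WE \<or> alt_even_path_same_layer B M1 M2 WE"
proof -
  have inj: "i = j" if "f i = Some a" "f j = Some a" for i j a
  proof (rule ccontr)
    assume "i \<noteq> j"
    then consider "i < j" | "j < i" by linarith
    then show False
    proof cases
      case 1
      then have "f (i + int (nat (j - i))) = f i" using that by simp
      then show False using noP 1 that by (metis option.distinct(1) zero_less_nat_eq diff_gt_0_iff_gt)
    next
      case 2
      then have "f (j + int (nat (i - j))) = f j" using that by simp
      then show False using noP 2 that by (metis option.distinct(1) zero_less_nat_eq diff_gt_0_iff_gt)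
    qed
  qed
  have mono: "B m \<subseteq> B n" if "m \<le> n" for m n
    using lift_Suc_mono_le[of B, OF Bmono that] .
  have both: "\<exists>n. u \<in> B n \<and> v \<in> B n" if uvw: "u \<in> Wf" "v \<in> Wf" for u v
  proof -
    obtain n1 n2 where "u \<in> B n1" "v \<in> B n2" using Bcov uvw by blast
    then show ?thesis using mono[of n1 "max n1 n2"] mono[of n2 "max n1 n2"] by auto
  qed
  have inWf: "f i = Some a \<Longrightarrow> a \<in> Wf" for i a unfolding Wf_def by blast
  have upb: "(\<exists>hi\<ge>0. f hi \<noteq> None \<and> f (hi+1) = None) \<or> (\<forall>i\<ge>0. f i \<noteq> None)"
  proof (cases "\<exists>k. f (int k) = None")
    case True
    define k where "k = (LEAST k. f (int k) = None)"
    have k: "f (int k) = None" unfolding k_def by (rule LeastI_ex) (use True in blast)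
    have k0: "k \<noteq> 0" using k f0 by (cases k) auto
    have "f (int (k - 1)) \<noteq> None" using not_less_Least[of "k - 1" "\<lambda>k. f (int k) = None"] k0 unfolding k_def by auto
    moreover have "int (k - 1) + 1 = int k" using k0 by simp
    ultimately show ?thesis using k by (intro disjI1 exI[of _ "int (k - 1)"]) auto
  next
    case False
    then show ?thesis by (metis nonneg_eq_int)
  qed
  have lob: "(\<exists>lo\<le>0. f lo \<noteq> None \<and> f (lo - 1) = None) \<or> (\<forall>i\<le>0. f i \<noteq> None)"
  proof (cases "\<exists>k. f (- int k) = None")
    case True
    define k where "k = (LEAST k. f (- int k) = None)"
    have k: "f (- int k) = None" unfolding k_def by (rule LeastI_ex) (use True in blast)
    have k0: "k \<noteq> 0" using k f0 by (cases k) auto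
    have "f (- int (k - 1)) \<noteq> None" using not_less_Least[of "k - 1" "\<lambda>k. f (- int k) = None"] k0 unfolding k_def by auto
    moreover have "- int (k - 1) - 1 = - int k" using k0 by simp
    ultimately show ?thesis using k by (intro disjI1 exI[of _ "- int (k - 1)"]) auto
  next
    case False
    have "f i \<noteq> None" if "i \<le> 0" for i
    proof -
      have "i = - int (nat (-i))" using that by simp
      then show ?thesis using False by metis
    qed
    then show ?thesis by blast
  qed
  show ?thesis
  proof (cases "\<forall>i. f i \<noteq> None")
    case True
    then show ?thesis using dray inj by blast
  next
    case notall: False
    consider (R1) hi where "hi \<ge> 0" "f hi \<noteq> None" "f (hi+1) = None" "\<forall>i\<le>0. f i \<noteq> None"
      | (R2) lo where "lo \<le> 0" "f lo \<noteq> None" "f (lo - 1) = None" "\<forall>i\<ge>0. f i \<noteq> None"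
      | (P) lo hi where "hi \<ge> 0" "f hi \<noteq> None" "f (hi+1) = None" "lo \<le> 0" "f lo \<noteq> None" "f (lo - 1) = None"
    proof -
      have "\<not> ((\<forall>i\<ge>0. f i \<noteq> None) \<and> (\<forall>i\<le>0. f i \<noteq> None))"
        using notall by (metis linorder_le_cases)
      then show ?thesis using upb lob that by blast
    qed
    then show ?thesis
    proof cases
      case R1
      have dom: "f i \<noteq> None \<longleftrightarrow> i \<le> hi" for i
      proof
        assume "f i \<noteq> None"
        then show "i \<le> hi" using interval[of 0 i "hi+1"] R1 f0 by (cases "i \<le> hi") auto
      next
        assume "i \<le> hi"
        then show "f i \<noteq> None" using interval[of 0 hi i] R1 by (cases "i \<le> 0") (auto simp: f0)
      qed
      obtain u where u: "f hi = Some u" using R1 by auto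
      have uA: "u \<in> AA \<union> BB" using end_up[OF u] R1 by (auto split: if_splits)
      have sub: "AA \<union> BB \<subseteq> {u}"
      proof
        fix v assume v: "v \<in> AA \<union> BB"
        then obtain i where i: "f i = Some v" unfolding AA_def BB_def Wf_def by blast
        have "i \<le> hi" using dom[of i] i by auto
        moreover have "\<not> i < hi"
        proof
          assume "i < hi"
          then have "f (i+1) \<noteq> None" "f (i - 1) \<noteq> None" using dom by auto
          then show False using interior[OF i] v by blast
        qed
        ultimately show "v \<in> {u}" using i u by force
      qed
      obtain n where "u \<in> B n" using Bcov inWf u by blast
      then have False using one_pt[OF keq uA sub] by blast
      then show ?thesis ..
    next
      case R2
      have dom: "f i \<noteq> None \<longleftrightarrow> lo \<le> i" for i
      proof
        assume "f i \<noteq> None"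
        then show "lo \<le> i" using interval[of i 0 "lo - 1"] R2 f0 by (cases "lo \<le> i") auto
      next
        assume "lo \<le> i"
        then show "f i \<noteq> None" using interval[of lo 0 i] R2 by (cases "0 \<le> i") (auto simp: f0)
      qed
      obtain u where u: "f lo = Some u" using R2 by auto
      have uA: "u \<in> AA \<union> BB" using end_dn[OF u] R2 by (auto split: if_splits)
      have sub: "AA \<union> BB \<subseteq> {u}"
      proof
        fix v assume v: "v \<in> AA \<union> BB"
        then obtain i where i: "f i = Some v" unfolding AA_def BB_def Wf_def by blast
        have "lo \<le> i" using dom[of i] i by auto
        moreover have "\<not> lo < i"
        proof
          assume "lo < i"
          then have "f (i+1) \<noteq> None" "f (i - 1) \<noteq> None" using dom by auto
          then show False using interior[OF i] v by blast
        qed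
        ultimately show "v \<in> {u}" using i u by force
      qed
      obtain n where "u \<in> B n" using Bcov inWf u by blast
      then have False using one_pt[OF keq uA sub] by blast
      then show ?thesis ..
    next
      case P
      have dom: "f i \<noteq> None \<longleftrightarrow> lo \<le> i \<and> i \<le> hi" for i
      proof
        assume fi: "f i \<noteq> None"
        have "i \<le> hi" using interval[of 0 i "hi+1"] P f0 fi by (cases "i \<le> hi") auto
        moreover have "lo \<le> i" using interval[of i 0 "lo - 1"] P f0 fi by (cases "lo \<le> i") auto
        ultimately show "lo \<le> i \<and> i \<le> hi" by simp
      next
        assume "lo \<le> i \<and> i \<le> hi"
        then show "f i \<noteq> None" using interval[of lo hi i] P by simp
      qed
      have lohi: "lo < hi"
      proof -
        have "f 1 \<noteq> None \<or> f (-1) \<noteq> None" by (rule x_nbr)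
        then show ?thesis using dom[of 1] dom[of "-1"] P by auto
      qed
      obtain u where u: "f lo = Some u" using P by auto
      obtain v where v: "f hi = Some v" using P by auto
      have uv: "u \<noteq> v" using inj u v lohi by fastforce
      have vS: "v \<in> (if even hi then AA else BB)" using end_up[OF v] P by simp
      have uS: "u \<in> (if even (lo - 1) then AA else BB)" using end_dn[OF u] P by simp
      have sub: "AA \<union> BB \<subseteq> {u, v}"
      proof
        fix w assume w: "w \<in> AA \<union> BB"
        then obtain i where i: "f i = Some w" unfolding AA_def BB_def Wf_def by blast
        have "lo \<le> i" "i \<le> hi" using dom[of i] i by auto
        moreover have "\<not> (lo < i \<and> i < hi)"
        proof
          assume "lo < i \<and> i < hi"
          then have "f (i+1) \<noteq> None" "f (i - 1) \<noteq> None" using dom by auto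
          then show False using interior[OF i] w by blast
        qed
        ultimately have "i = lo \<or> i = hi" by linarith
        then show "w \<in> {u, v}" using i u v by auto
      qed
      have dj: "AA \<inter> BB = {}" by (rule AB_disj)
      show ?thesis
      proof (cases "even (hi - lo)")
        case False
        then have par: "even hi = even (lo - 1)" by presburger
        obtain n where n: "u \<in> B n" "v \<in> B n" using both inWf u v by blast
        have "False"
        proof (cases "even hi")
          case True
          then have "u \<in> AA" "v \<in> AA" using uS vS par by auto
          then have "AA \<inter> B n = {u,v}" "BB \<inter> B n = {}" using sub dj n by auto
          then show False using keq[of n] uv by simp
        next
          case False
          then have "u \<in> BB" "v \<in> BB" using uS vS par by auto
          then have "BB \<inter> B n = {u,v}" "AA \<inter> B n = {}" using sub dj n by auto
          then show False using keq[of n] uv by simp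
        qed
        then show ?thesis ..
      next
        case True
        then have par: "even hi \<noteq> even (lo - 1)" by presburger
        have eqv: "u \<in> B n \<longleftrightarrow> v \<in> B n" for n
        proof (cases "even hi")
          case True
          then have "v \<in> AA" "u \<in> BB" using uS vS par by auto
          then have "AA = {v}" "BB = {u}" using sub dj uv by auto
          then show ?thesis using keq[of n] by (cases "u \<in> B n"; cases "v \<in> B n") auto
        next
          case False
          then have "v \<in> BB" "u \<in> AA" using uS vS par by auto
          then have "AA = {u}" "BB = {v}" using sub dj uv by auto
          then show ?thesis using keq[of n] by (cases "u \<in> B n"; cases "v \<in> B n") auto
        qed
        obtain n1 where "u \<in> B n1" using Bcov inWf u by blast
        define n where "n = (LEAST n. u \<in> B n)"
        have un: "u \<in> B n" unfolding n_def by (rule LeastI) fact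
        have "n = 0 \<or> (u \<notin> B (n - 1) \<and> v \<notin> B (n - 1))"
          using not_less_Least[of "n - 1" "\<lambda>n. u \<in> B n"] eqv unfolding n_def by (cases "n = 0") auto
        then have lay: "\<exists>n. the (f lo) \<in> B n \<and> the (f hi) \<in> B n \<and>
             (n = 0 \<or> (the (f lo) \<notin> B (n - 1) \<and> the (f hi) \<notin> B (n - 1)))"
          using un eqv u v by auto
        have ev: "even (hi - lo)" using True .
        have "alt_even_path_same_layer B M1 M2 WE"
          by (rule fin_path[where lo=lo and hi=hi]) (use lohi dom inj ev lay in \<open>blast+\<close>)
        then show ?thesis by blast
      qed
    qed
  qed
qed

end



theorem lemmaA2:
  fixes V :: "'a set" and E :: "'a set set" and B :: "nat \<Rightarrow> 'a set"
    and M1 M2 :: "'a set set"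
  assumes "simple_graph V E"
    and "induced_connected E V"
    and "countable V" and "infinite V"
    and "dagger V E B"
    and "maximum_matching E B M1" and "maximum_matching E B M2"
  shows "\<forall>C \<in> edge_components (M1 \<oplus> M2).
           alt_even_cycle M1 M2 C \<or> alt_double_ray M1 M2 C \<or>
           alt_even_path_same_layer B M1 M2 C"
proof
  fix C assume C: "C \<in> edge_components (M1 \<oplus> M2)"
  then obtain x where x: "x \<in> \<Union>(M1 \<oplus> M2)"
    and Ceq: "C = {e\<in>M1 \<oplus> M2. \<exists>y\<in>e. (\<lambda>a b. {a, b} \<in> M1 \<oplus> M2)\<^sup>*\<^sup>* x y}"
    unfolding edge_components_def by blast
  have mm1: "matching E M1" and mm2: "matching E M2" using assms(6,7) unfolding maximum_matching_def by auto
  interpret ctx V E M1 M2 x using assms(1) mm1 mm2 x by unfold_locales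
  have CWE: "C = WE" using C_eq Ceq by simp
  have UC: "\<Union>C = Wf" using UWE CWE by simp
  have cl: "C \<subseteq> M1 \<oplus> M2 \<and> (\<forall>e\<in>M1 \<oplus> M2. e \<inter> \<Union>C \<noteq> {} \<longrightarrow> e \<in> C)"
    using comp_closed[OF assms(1) DE Ceq] .
  have keq: "card (AA \<inter> B n) = card (BB \<inter> B n)" for n
    using keq[OF assms(6,7,5), of C n] cl UC unfolding AA_def BB_def by simp
  have Bmono: "B n \<subseteq> B (Suc n)" for n using assms(5) unfolding dagger_def by blast
  have Bcov: "\<exists>n. v \<in> B n" if "v \<in> Wf" for v
  proof -
    have "v \<in> V" using Wf_V that by blast
    then show ?thesis using assms(5) unfolding dagger_def by blast
  qed
  show "alt_even_cycle M1 M2 C \<or> alt_double_ray M1 M2 C \<or> alt_even_path_same_layer B M1 M2 C"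
  proof (cases "\<exists>d. 0 < d \<and> (\<exists>i. f i \<noteq> None \<and> f (i + int d) = f i)")
    case True
    then show ?thesis using cycle_case CWE by blast
  next
    case False
    then show ?thesis using noncycle[OF False keq Bmono Bcov] CWE by blast
  qed
qed


end
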